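(* Let $G=(V,E,L)$ be a hypergraph with loops, and let $G_1,G_2$ be section hypergraphs of $G$ such that $G_1\cup G_2=G$, $G_1\cap G_2$ is a complete hypergraph, and $G_1\cap G_2$ has no plus loops. Then $\mathrm{PP}(G)$ is decomposable into $\mathrm{PP}(G_1)$ and $\mathrm{PP}(G_2)$, i.e., $$\mathrm{PP}(G)=\{z\in\mathbb{R}^{V\cup E\cup L}: z|_{G_1}\in\mathrm{PP}(G_1),\ z|_{G_2}\in\mathrm{PP}(G_2)\},$$ where $z|_{G_k}$ denotes the restriction of $z$ to the coordinates indexed by the nodes, edges and loops of $G_k$.
   Context: A hypergraph with loops is $G=(V,E,L)$: $V$ a finite node set, $E$ a set of subsets of $V$ of cardinality at least two, $L$ a set of loops $\{i,i\}$, $i\in V$, partitioned as $L=L^-\cup L^+$ (minus/plus loops). It is complete if $E$ consists of all subsets of $V$ of cardinality at least two. For $V'\subseteq V$, the section hypergraph induced by $V'$ is $(V',E',L')$ with $E'=\{e\in E: e\subseteq V'\}$, $L'=\{\{i,i\}\in L: i\in V'\}$, each loop keeping its sign. For $G_k=(V_k,E_k,L_k)$: $G_1\cap G_2:=(V_1\cap V_2,E_1\cap E_2,L_1\cap L_2)$ and $G_1\cup G_2:=(V_1\cup V_2,E_1\cup E_2,L_1\cup L_2)$. $\mathrm{PP}(G):=\mathrm{conv}\{z\in\mathbb{R}^{V\cup E\cup L}: z_{ii}\ge z_i^2\ \forall\{i,i\}\in L^+,\ z_{ii}\le z_i^2\ \forall \{i,i\}\in L^-,\ z_e=\prod_{i\in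 e}z_i\ \forall e\in E,\ z_i\in[0,1]\ \forall i\in V\}$. *)

theory Defs
  imports Complex_Main
begin

text \<open>A hypergraph with loops G = (V, E, L), L = L^- \<union> L^+.  A loop {i,i} is identified
  with its node i; lminus / lplus are the sets of nodes carrying a minus / plus loop.\<close>
record 'a hgraph =
  nodes  :: "'a set"
  edges  :: "'a set set"
  lminus :: "'a set"
  lplus  :: "'a set"

definition hypergraph_with_loops :: "'a hgraph \<Rightarrow> bool" where
  "hypergraph_with_loops G \<longleftrightarrow> finite (nodes G)
     \<and> (\<forall>e\<in>edges G. e \<subseteq> nodes G \<and> 2 \<le> card e)
     \<and> lminus G \<subseteq> nodes G \<and> lplus G \<subseteq> nodes G \<and> lminus G \<inter> lplus G = {}"

definition complete_hg :: "'a hgraph \<Rightarrow> bool" where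
  "complete_hg G \<longleftrightarrow> edges G = {e. e \<subseteq> nodes G \<and> 2 \<le> card e}"

definition section_hg :: "'a hgraph \<Rightarrow> 'a set \<Rightarrow> 'a hgraph" where
  "section_hg G V' = \<lparr>nodes = V', edges = {e\<in>edges G. e \<subseteq> V'},
     lminus = lminus G \<inter> V', lplus = lplus G \<inter> V'\<rparr>"

definition is_section_hg :: "'a hgraph \<Rightarrow> 'a hgraph \<Rightarrow> bool" where
  "is_section_hg H G \<longleftrightarrow> (\<exists>V'. V' \<subseteq> nodes G \<and> H = section_hg G V')"

definition hg_inter :: "'a hgraph \<Rightarrow> 'a hgraph \<Rightarrow> 'a hgraph" where
  "hg_inter G1 G2 = \<lparr>nodes = nodes G1 \<inter> nodes G2, edges = edges G1 \<inter> edges G2,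
     lminus = lminus G1 \<inter> lminus G2, lplus = lplus G1 \<inter> lplus G2\<rparr>"

definition hg_union :: "'a hgraph \<Rightarrow> 'a hgraph \<Rightarrow> 'a hgraph" where
  "hg_union G1 G2 = \<lparr>nodes = nodes G1 \<union> nodes G2, edges = edges G1 \<union> edges G2,
     lminus = lminus G1 \<union> lminus G2, lplus = lplus G1 \<union> lplus G2\<rparr>"

datatype 'a coord = Nd 'a | Ed "'a set" | Lp 'a

definition coords :: "'a hgraph \<Rightarrow> 'a coord set" where
  "coords G = Nd ` nodes G \<union> Ed ` edges G \<union> Lp ` (lminus G \<union> lplus G)"

text \<open>A point of R^(V \<union> E \<union> L) is a function on coordinates vanishing outside coords G.\<close>
definition space :: "'a hgraph \<Rightarrow> ('a coord \<Rightarrow> real) set" where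
  "space G = {z. \<forall>c. c \<notin> coords G \<longrightarrow> z c = 0}"

definition restr :: "'a hgraph \<Rightarrow> ('a coord \<Rightarrow> real) \<Rightarrow> ('a coord \<Rightarrow> real)" where
  "restr H z = (\<lambda>c. if c \<in> coords H then z c else 0)"

definition conv :: "('i \<Rightarrow> real) set \<Rightarrow> ('i \<Rightarrow> real) set" where
  "conv S = {z. \<exists>(n::nat) (u::nat \<Rightarrow> real) (x::nat \<Rightarrow> 'i \<Rightarrow> real).
      (\<forall>k<n. 0 \<le> u k \<and> x k \<in> S) \<and> (\<Sum>k<n. u k) = 1 \<and> z = (\<lambda>c. \<Sum>k<n. u k * x k c)}"

definition PP_points :: "'a hgraph \<Rightarrow> ('a coord \<Rightarrow> real) set" where
  "PP_points G = {z \<in> space G.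
      (\<forall>i\<in>lplus G. z (Lp i) \<ge> (z (Nd i))^2)
    \<and> (\<forall>i\<in>lminus G. z (Lp i) \<le> (z (Nd i))^2)
    \<and> (\<forall>e\<in>edges G. z (Ed e) = (\<Prod>i\<in>e. z (Nd i)))
    \<and> (\<forall>i\<in>nodes G. 0 \<le> z (Nd i) \<and> z (Nd i) \<le> 1)}"

definition PP :: "'a hgraph \<Rightarrow> ('a coord \<Rightarrow> real) set" where
  "PP G = conv (PP_points G)"

end

theory Submission
  imports Defs "HOL-Analysis.Convex" "HOL-Library.Function_Algebras"
begin

instantiation "fun" :: (type, real_vector) real_vector
begin
definition scaleR_fun :: "real \<Rightarrow> ('a \<Rightarrow> 'b) \<Rightarrow> 'a \<Rightarrow> 'b" where
  "scaleR_fun r f = (\<lambda>x. r *\<^sub>R f x)"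
instance by standard (auto simp: scaleR_fun_def fun_eq_iff scaleR_add_right scaleR_add_left)
end

lemma scaleR_fun_apply [simp]: "(r *\<^sub>R f) x = r *\<^sub>R f x"
  by (simp add: scaleR_fun_def)

lemma sum_fun_apply: "(sum f A) x = sum (\<lambda>k. f k x) A"
  by (induction A rule: infinite_finite_induct) auto

lemma conv_eq: "conv S = convex hull S"
proof
  show "conv S \<subseteq> convex hull S"
  proof
    fix z assume "z \<in> conv S"
    then obtain n and u :: "nat \<Rightarrow> real" and x where h: "\<forall>k<n. 0 \<le> u k \<and> x k \<in> S" "(\<Sum>k<n. u k) = 1"
      "z = (\<lambda>c. \<Sum>k<n. u k * x k c)" unfolding conv_def mem_Collect_eq by (elim exE conjE) (rule that, auto)
    have "z = (\<Sum>k<n. u k *\<^sub>R x k)" unfolding h(3) by (rule ext) (simp add: sum_fun_apply)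
    also have "\<dots> \<in> convex hull S"
      using h by (intro convex_sum) (auto simp: hull_inc)
    finally show "z \<in> convex hull S" .
  qed
next
  show "convex hull S \<subseteq> conv S"
  proof
    fix z assume "z \<in> convex hull S"
    then obtain F and u :: "('a \<Rightarrow> real) \<Rightarrow> real" where F: "finite F" "F \<subseteq> S" "\<forall>x\<in>F. 0 \<le> u x" "sum u F = 1"
      "(\<Sum>v\<in>F. u v *\<^sub>R v) = z" unfolding convex_hull_explicit by blast
    obtain h where h: "bij_betw h {..<card F} F"
      using ex_bij_betw_nat_finite[OF F(1)] lessThan_atLeast0 by auto
    have s1: "(\<Sum>k<card F. u (h k)) = 1"
      using sum.reindex_bij_betw[OF h, of u] F(4) by simp
    have s2: "z = (\<lambda>c. \<Sum>k<card F. u (h k) * h k c)"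
    proof
      fix c
      have "z c = (\<Sum>v\<in>F. u v * v c)" using F(5) by (auto simp: sum_fun_apply)
      also have "\<dots> = (\<Sum>k<card F. u (h k) * h k c)"
        using sum.reindex_bij_betw[OF h, of "\<lambda>v. u v * v c"] by simp
      finally show "z c = (\<Sum>k<card F. u (h k) * h k c)" .
    qed
    have "\<forall>k<card F. 0 \<le> u (h k) \<and> h k \<in> S"
      using h F(2,3) by (auto simp: bij_betw_def)
    then show "z \<in> conv S" unfolding conv_def mem_Collect_eq
      by (intro exI[of _ "card F"] exI[of _ "\<lambda>k. u (h k)"] exI[of _ h]) (use s1 s2 in auto)
  qed
qed


definition flip :: "'a hgraph \<Rightarrow> 'a \<Rightarrow> ('a coord \<Rightarrow> real) \<Rightarrow> real \<Rightarrow> ('a coord \<Rightarrow> real)" where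
  "flip H j y s = (\<lambda>c. case c of
      Nd i \<Rightarrow> if i = j then s else y c
    | Ed e \<Rightarrow> if e \<in> edges H \<and> j \<in> e then s * (\<Prod>i\<in>e-{j}. y (Nd i)) else y c
    | Lp i \<Rightarrow> if i = j \<and> j \<in> lminus H then y c - y (Nd j) + s else y c)"

lemma flip_Nd: "flip H j y s (Nd i) = (if i = j then s else y (Nd i))"
  by (simp add: flip_def)

lemma flip_in:
  assumes y: "y \<in> PP_points H" and j: "j \<in> nodes H" "j \<notin> lplus H"
    and fin: "\<forall>e\<in>edges H. finite e" and s: "s = 0 \<or> s = 1"
  shows "flip H j y s \<in> PP_points H"
proof -
  have sp: "y \<in> space H" and pl: "\<forall>i\<in>lplus H. y (Lp i) \<ge> (y (Nd i))^2"
    and mi: "\<forall>i\<in>lminus H. y (Lp i) \<le> (y (Nd i))^2"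
    and ed: "\<forall>e\<in>edges H. y (Ed e) = (\<Prod>i\<in>e. y (Nd i))"
    and nd: "\<forall>i\<in>nodes H. 0 \<le> y (Nd i) \<and> y (Nd i) \<le> 1"
    using y by (auto simp: PP_points_def)
  let ?f = "flip H j y s"
  have "?f \<in> space H"
    unfolding space_def
  proof (intro CollectI allI impI)
    fix c assume c: "c \<notin> coords H"
    have "y c = 0" using sp c by (auto simp: space_def)
    then show "?f c = 0" using c j
      by (cases c) (auto simp: flip_def coords_def)
  qed
  moreover have "\<forall>i\<in>lplus H. ?f (Lp i) \<ge> (?f (Nd i))^2"
    using pl j by (auto simp: flip_def)
  moreover have "\<forall>i\<in>lminus H. ?f (Lp i) \<le> (?f (Nd i))^2"
  proof
    fix i assume i: "i \<in> lminus H"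
    show "?f (Lp i) \<le> (?f (Nd i))^2"
    proof (cases "i = j")
      case True
      have t: "0 \<le> y (Nd j)" "y (Nd j) \<le> 1" using nd j by auto
      have "y (Nd j)^2 \<le> y (Nd j)" using t by (simp add: power2_eq_square mult_right_le_one_le)
      moreover have "y (Lp j) \<le> y (Nd j)^2" using mi i True by auto
      moreover have "s^2 = s" using s by auto
      ultimately show ?thesis using True i by (simp add: flip_def)
    next
      case False
      then show ?thesis using mi i by (simp add: flip_def)
    qed
  qed
  moreover have "\<forall>e\<in>edges H. ?f (Ed e) = (\<Prod>i\<in>e. ?f (Nd i))"
  proof
    fix e assume e: "e \<in> edges H"
    show "?f (Ed e) = (\<Prod>i\<in>e. ?f (Nd i))"
    proof (cases "j \<in> e")
      case True
      have "(\<Prod>i\<in>e. ?f (Nd i)) = ?f (Nd j) * (\<Prod>i\<in>e-{j}. ?f (Nd i))"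
        using fin e True by (simp add: prod.remove)
      also have "(\<Prod>i\<in>e-{j}. ?f (Nd i)) = (\<Prod>i\<in>e-{j}. y (Nd i))"
        by (rule prod.cong) (auto simp: flip_Nd)
      finally show ?thesis using e True by (simp add: flip_def)
    next
      case False
      have "(\<Prod>i\<in>e. ?f (Nd i)) = (\<Prod>i\<in>e. y (Nd i))"
        using False by (intro prod.cong) (auto simp: flip_Nd)
      then show ?thesis using e False ed by (simp add: flip_def)
    qed
  qed
  moreover have "\<forall>i\<in>nodes H. 0 \<le> ?f (Nd i) \<and> ?f (Nd i) \<le> 1"
    using nd s by (auto simp: flip_Nd)
  ultimately show ?thesis unfolding PP_points_def by blast
qed

lemma flip_comb:
  assumes y: "y \<in> PP_points H" and j: "j \<in> nodes H"
    and fin: "\<forall>e\<in>edges H. finite e"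
  shows "y = (1 - y (Nd j)) *\<^sub>R flip H j y 0 + y (Nd j) *\<^sub>R flip H j y 1"
proof
  fix c
  let ?t = "y (Nd j)"
  have ed: "\<forall>e\<in>edges H. y (Ed e) = (\<Prod>i\<in>e. y (Nd i))"
    using y by (auto simp: PP_points_def)
  show "y c = ((1 - ?t) *\<^sub>R flip H j y 0 + ?t *\<^sub>R flip H j y 1) c"
  proof (cases c)
    case (Nd i)
    then show ?thesis by (simp add: flip_def algebra_simps)
  next
    case (Ed e)
    show ?thesis
    proof (cases "e \<in> edges H \<and> j \<in> e")
      case True
      then have "y (Ed e) = ?t * (\<Prod>i\<in>e-{j}. y (Nd i))"
        using ed fin prod.remove[of e j "\<lambda>i. y (Nd i)"] by auto
      then show ?thesis using True Ed by (simp add: flip_def algebra_simps)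
    next
      case False
      then show ?thesis using Ed by (auto simp: flip_def algebra_simps)
    qed
  next
    case (Lp i)
    then show ?thesis by (simp add: flip_def algebra_simps)
  qed
qed

definition binpts :: "'a hgraph \<Rightarrow> 'a set \<Rightarrow> ('a coord \<Rightarrow> real) set" where
  "binpts H W = {y \<in> PP_points H. \<forall>i\<in>W. y (Nd i) = 0 \<or> y (Nd i) = 1}"

lemma binarize:
  assumes "finite W" "W \<subseteq> nodes H" "W \<inter> lplus H = {}" "\<forall>e\<in>edges H. finite e"
  shows "PP_points H \<subseteq> convex hull (binpts H W)"
  using assms(1-3)
proof (induction W rule: finite_induct)
  case empty
  then show ?case by (auto simp: binpts_def intro: hull_inc)
next
  case (insert j W)
  have j: "j \<in> nodes H" "j \<notin> lplus H" using insert.prems by auto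
  have "binpts H W \<subseteq> convex hull (binpts H (insert j W))"
  proof
    fix y assume y: "y \<in> binpts H W"
    then have yP: "y \<in> PP_points H" by (simp add: binpts_def)
    have "flip H j y s \<in> binpts H (insert j W)" if "s = 0 \<or> s = 1" for s
      using flip_in[OF yP j assms(4) that] y that by (auto simp: binpts_def flip_Nd)
    then have h: "flip H j y 0 \<in> convex hull (binpts H (insert j W))"
       "flip H j y 1 \<in> convex hull (binpts H (insert j W))"
      by (auto intro: hull_inc)
    have t: "0 \<le> y (Nd j)" "y (Nd j) \<le> 1" using yP j by (auto simp: PP_points_def)
    show "y \<in> convex hull (binpts H (insert j W))"
      apply (subst flip_comb[OF yP j(1) assms(4)])
      apply (rule convexD[OF convex_convex_hull h])
      using t by auto
  qed
  then have "convex hull (binpts H W) \<subseteq> convex hull (binpts H (insert j W))"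
    by (intro hull_minimal) auto
  then show ?case using insert by auto
qed


lemma moment_inj:
  fixes a :: "'a set \<Rightarrow> real"
  assumes fin: "finite W" and h: "\<And>U. U \<subseteq> W \<Longrightarrow> (\<Sum>T\<in>Pow W. a T * (if U \<subseteq> T then 1 else 0)) = 0"
  shows "T \<subseteq> W \<Longrightarrow> a T = 0"
proof -
  have "\<forall>T. T \<subseteq> W \<longrightarrow> card (W - T) = n \<longrightarrow> a T = 0" for n
  proof (induction n rule: less_induct)
    case (less n)
    show ?case
    proof (intro allI impI)
      fix T assume T: "T \<subseteq> W" "card (W - T) = n"
      have z: "(\<Sum>T'\<in>Pow W - {T}. a T' * (if T \<subseteq> T' then 1 else 0)) = 0"
      proof (rule sum.neutral, intro ballI)
        fix T' assume T': "T' \<in> Pow W - {T}"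
        show "a T' * (if T \<subseteq> T' then 1 else 0) = 0"
        proof (cases "T \<subseteq> T'")
          case True
          then have "T \<subset> T'" using T' by auto
          then obtain x where "x \<in> T'" "x \<notin> T" by auto
          then have "W - T' \<subset> W - T" using T' True by auto
          then have "card (W - T') < card (W - T)" using fin by (auto intro: psubset_card_mono)
          then have "a T' = 0" using less.IH T T' by auto
          then show ?thesis by simp
        qed simp
      qed
      have "0 = (\<Sum>T'\<in>Pow W. a T' * (if T \<subseteq> T' then 1 else 0))" using h T by simp
      also have "\<dots> = a T * (if T \<subseteq> T then 1 else 0) + (\<Sum>T'\<in>Pow W - {T}. a T' * (if T \<subseteq> T' then 1 else 0))"
        using fin T by (intro sum.remove) auto
      finally show "a T = 0" using z by simp
    qed
  qed
  then show "T \<subseteq> W \<Longrightarrow> a T = 0" by blast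
qed

definition mom :: "('a coord \<Rightarrow> real) \<Rightarrow> 'a set \<Rightarrow> real" where
  "mom z U = (if U = {} then 1 else if card U = 1 then z (Nd (the_elem U)) else z (Ed U))"

lemma moment:
  assumes F: "finite F" "F \<subseteq> PP_points H" "\<forall>x\<in>F. 0 \<le> u x" "sum u F = 1"
    "(\<Sum>x\<in>F. u x *\<^sub>R x) = restr H z"
    and U: "finite U" "U \<subseteq> nodes H" "2 \<le> card U \<Longrightarrow> U \<in> edges H"
  shows "(\<Sum>x\<in>F. u x * (\<Prod>i\<in>U. x (Nd i))) = mom z U"
proof -
  have ev: "restr H z c = (\<Sum>x\<in>F. u x * x c)" for c
    using F(5)[symmetric] by (simp add: sum_fun_apply)
  consider "U = {}" | "card U = 1" | "2 \<le> card U" "U \<noteq> {}" using U(1)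
    by (metis One_nat_def card_0_eq less_2_cases not_le)
  then show ?thesis
  proof cases
    case 1
    then show ?thesis using F(4) by (simp add: mom_def)
  next
    case 2
    then obtain i where i: "U = {i}" by (auto simp: card_Suc_eq)
    then have "Nd i \<in> coords H" using U(2) by (auto simp: coords_def)
    then show ?thesis using ev[of "Nd i"] i by (simp add: mom_def restr_def)
  next
    case 3
    then have e: "U \<in> edges H" using U(3) by auto
    then have "Ed U \<in> coords H" by (auto simp: coords_def)
    moreover have "x (Ed U) = (\<Prod>i\<in>U. x (Nd i))" if "x \<in> F" for x
      using F(2) that e by (auto simp: PP_points_def)
    ultimately show ?thesis using ev[of "Ed U"] 3
      by (simp add: mom_def restr_def)
  qed
qed


lemma sec_simps [simp]:
  "nodes (section_hg G V) = V"
  "edges (section_hg G V) = {e\<in>edges G. e \<subseteq> V}"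
  "lminus (section_hg G V) = lminus G \<inter> V"
  "lplus (section_hg G V) = lplus G \<inter> V"
  by (simp_all add: section_hg_def)

lemma coords_sec [simp]:
  "Nd i \<in> coords (section_hg G V) \<longleftrightarrow> i \<in> V"
  "Ed e \<in> coords (section_hg G V) \<longleftrightarrow> e \<in> edges G \<and> e \<subseteq> V"
  "Lp i \<in> coords (section_hg G V) \<longleftrightarrow> i \<in> (lminus G \<union> lplus G) \<inter> V"
  by (auto simp: coords_def)

lemma coords_G:
  assumes hg: "hypergraph_with_loops G" and nV: "nodes G = V1 \<union> V2"
    and eV: "\<forall>e\<in>edges G. e \<subseteq> V1 \<or> e \<subseteq> V2"
  shows "coords G = coords (section_hg G V1) \<union> coords (section_hg G V2)"
proof -
  have "lminus G \<union> lplus G \<subseteq> V1 \<union> V2" using hg nV by (auto simp: hypergraph_with_loops_def)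
  then show ?thesis using nV eV
    by (auto simp: coords_def)
qed

lemma glue_in:
  assumes hg: "hypergraph_with_loops G" and nV: "nodes G = V1 \<union> V2"
    and eV: "\<forall>e\<in>edges G. e \<subseteq> V1 \<or> e \<subseteq> V2"
    and x: "x \<in> PP_points (section_hg G V1)" and y: "y \<in> PP_points (section_hg G V2)"
    and agree: "\<forall>i\<in>V1\<inter>V2. x (Nd i) = y (Nd i)"
  shows "(\<lambda>c. if c \<in> coords (section_hg G V1) then x c else y c) \<in> PP_points G"
proof -
  let ?G1 = "section_hg G V1" and ?G2 = "section_hg G V2"
  let ?g = "\<lambda>c. if c \<in> coords ?G1 then x c else y c"
  have disj: "lminus G \<inter> lplus G = {}" and lsub: "lminus G \<union> lplus G \<subseteq> V1 \<union> V2"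
    using hg nV by (auto simp: hypergraph_with_loops_def)
  have cG: "coords G = coords ?G1 \<union> coords ?G2" by (rule coords_G[OF hg nV eV])
  have xs: "x \<in> space ?G1" and xpl: "\<forall>i\<in>lplus G \<inter> V1. x (Lp i) \<ge> (x (Nd i))^2"
    and xmi: "\<forall>i\<in>lminus G \<inter> V1. x (Lp i) \<le> (x (Nd i))^2"
    and xed: "\<forall>e\<in>edges G. e \<subseteq> V1 \<longrightarrow> x (Ed e) = (\<Prod>i\<in>e. x (Nd i))"
    and xnd: "\<forall>i\<in>V1. 0 \<le> x (Nd i) \<and> x (Nd i) \<le> 1"
    using x by (auto simp: PP_points_def)
  have ys: "y \<in> space ?G2" and ypl: "\<forall>i\<in>lplus G \<inter> V2. y (Lp i) \<ge> (y (Nd i))^2"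
    and ymi: "\<forall>i\<in>lminus G \<inter> V2. y (Lp i) \<le> (y (Nd i))^2"
    and yed: "\<forall>e\<in>edges G. e \<subseteq> V2 \<longrightarrow> y (Ed e) = (\<Prod>i\<in>e. y (Nd i))"
    and ynd: "\<forall>i\<in>V2. 0 \<le> y (Nd i) \<and> y (Nd i) \<le> 1"
    using y by (auto simp: PP_points_def)
  have g1: "?g (Nd i) = x (Nd i)" if "i \<in> V1" for i using that by simp
  have g2: "?g (Nd i) = y (Nd i)" if "i \<in> V2" for i using that agree by auto
  have "?g \<in> space G"
    unfolding space_def
  proof (intro CollectI allI impI)
    fix c assume "c \<notin> coords G"
    then show "?g c = 0" using ys cG by (auto simp: space_def)
  qed
  moreover have "\<forall>i\<in>lplus G. ?g (Lp i) \<ge> (?g (Nd i))^2"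
  proof
    fix i assume i: "i \<in> lplus G"
    show "?g (Lp i) \<ge> (?g (Nd i))^2"
    proof (cases "i \<in> V1")
      case True then show ?thesis using i xpl by auto
    next
      case False
      then have "i \<in> V2" using i lsub by auto
      then show ?thesis using i ypl False g2 by auto
    qed
  qed
  moreover have "\<forall>i\<in>lminus G. ?g (Lp i) \<le> (?g (Nd i))^2"
  proof
    fix i assume i: "i \<in> lminus G"
    show "?g (Lp i) \<le> (?g (Nd i))^2"
    proof (cases "i \<in> V1")
      case True then show ?thesis using i xmi by auto
    next
      case False
      then have "i \<in> V2" using i lsub by auto
      then show ?thesis using i ymi False g2 by auto
    qed
  qed
  moreover have "\<forall>e\<in>edges G. ?g (Ed e) = (\<Prod>i\<in>e. ?g (Nd i))"
  proof
    fix e assume e: "e \<in> edges G"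
    show "?g (Ed e) = (\<Prod>i\<in>e. ?g (Nd i))"
    proof (cases "e \<subseteq> V1")
      case True
      have "?g (Nd i) = x (Nd i)" if "i \<in> e" for i using g1 True that by blast
      then have "(\<Prod>i\<in>e. ?g (Nd i)) = (\<Prod>i\<in>e. x (Nd i))"
        by (rule prod.cong[OF refl])
      then show ?thesis using True e xed by simp
    next
      case False
      then have V2: "e \<subseteq> V2" using eV e by auto
      have "?g (Nd i) = y (Nd i)" if "i \<in> e" for i using g2 V2 that by blast
      then have "(\<Prod>i\<in>e. ?g (Nd i)) = (\<Prod>i\<in>e. y (Nd i))"
        by (rule prod.cong[OF refl])
      then show ?thesis using False e yed V2 by simp
    qed
  qed
  moreover have "\<forall>i\<in>nodes G. 0 \<le> ?g (Nd i) \<and> ?g (Nd i) \<le> 1"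
    using xnd ynd nV g2 by auto
  ultimately show ?thesis unfolding PP_points_def by blast
qed

lemma restr_in:
  assumes x: "x \<in> PP_points G" and V: "V \<subseteq> nodes G"
  shows "restr (section_hg G V) x \<in> PP_points (section_hg G V)"
proof -
  have pr: "(\<Prod>i\<in>e. restr (section_hg G V) x (Nd i)) = (\<Prod>i\<in>e. x (Nd i))" if "e \<subseteq> V" for e
    using that by (intro prod.cong) (auto simp: restr_def)
  show ?thesis using x V pr by (auto simp: PP_points_def restr_def space_def)
qed


lemma prodpat:
  assumes "\<forall>i\<in>W. x (Nd i) = 0 \<or> x (Nd i) = 1" "U \<subseteq> W" "finite W"
  shows "(\<Prod>i\<in>U. x (Nd i)) = (if U \<subseteq> {i\<in>W. x (Nd i) = 1} then 1 else (0::real))"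
proof (cases "U \<subseteq> {i\<in>W. x (Nd i) = 1}")
  case True
  then show ?thesis by (auto intro: prod.neutral)
next
  case False
  then obtain i where i: "i \<in> U" "x (Nd i) \<noteq> 1" using assms(2) by auto
  then have "x (Nd i) = 0" using assms(1,2) by auto
  moreover have "finite U" using assms(2,3) finite_subset by auto
  ultimately show ?thesis using False i by (auto intro: prod_zero)
qed

lemma group_lemma:
  fixes u :: "'b \<Rightarrow> real"
  assumes "finite F" "pat ` F \<subseteq> P" "finite P"
  shows "(\<Sum>x\<in>F. u x * f (pat x)) = (\<Sum>T\<in>P. (\<Sum>x\<in>{x\<in>F. pat x = T}. u x) * f T)"
proof -
  have "(\<Sum>x\<in>F. u x * f (pat x)) = (\<Sum>T\<in>P. \<Sum>x\<in>{x\<in>F. pat x = T}. u x * f (pat x))"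
    using sum.group[OF assms(1,3,2), of "\<lambda>x. u x * f (pat x)"] by simp
  also have "\<dots> = (\<Sum>T\<in>P. (\<Sum>x\<in>{x\<in>F. pat x = T}. u x) * f T)"
    by (intro sum.cong refl) (auto simp: sum_distrib_right)
  finally show ?thesis .
qed

lemma normalized_in_hull:
  fixes u :: "('c \<Rightarrow> real) \<Rightarrow> real"
  assumes "finite A" "\<forall>x\<in>A. 0 \<le> u x" "sum u A \<noteq> 0"
  shows "(1 / sum u A) *\<^sub>R (\<Sum>x\<in>A. u x *\<^sub>R x) \<in> convex hull A"
proof -
  have "(1 / sum u A) *\<^sub>R (\<Sum>x\<in>A. u x *\<^sub>R x) = (\<Sum>x\<in>A. (u x / sum u A) *\<^sub>R x)"
    by (simp add: scaleR_sum_right)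
  also have "\<dots> \<in> convex hull A"
  proof (rule convex_sum)
    show "(\<Sum>x\<in>A. u x / sum u A) = 1" using assms(3) by (simp add: sum_divide_distrib[symmetric])
    show "0 \<le> u x / sum u A" if "x \<in> A" for x
      using assms(2) that sum_nonneg[of A u] by auto
  qed (use assms in \<open>auto intro: hull_inc\<close>)
  finally show ?thesis .
qed

lemma scaled_sum:
  fixes u :: "('c \<Rightarrow> real) \<Rightarrow> real"
  assumes "finite A" "\<forall>x\<in>A. 0 \<le> u x"
  shows "(\<Sum>x\<in>A. u x *\<^sub>R x) = sum u A *\<^sub>R ((1 / sum u A) *\<^sub>R (\<Sum>x\<in>A. u x *\<^sub>R x))"
proof (cases "sum u A = 0")
  case True
  then have "\<forall>x\<in>A. u x = 0" using assms sum_nonneg_eq_0_iff by blast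
  then show ?thesis using True by simp
next
  case False
  then show ?thesis by simp
qed


lemma glue_main:
  assumes hg: "hypergraph_with_loops G" and nV: "nodes G = V1 \<union> V2"
    and eV: "\<forall>e\<in>edges G. e \<subseteq> V1 \<or> e \<subseteq> V2"
    and fin: "\<forall>e\<in>edges G. finite e"
    and noplus: "lplus G \<inter> (V1 \<inter> V2) = {}"
    and compl: "\<And>U. U \<subseteq> V1 \<inter> V2 \<Longrightarrow> 2 \<le> card U \<Longrightarrow> U \<in> edges G"
    and z: "z \<in> space G"
    and z1: "restr (section_hg G V1) z \<in> convex hull PP_points (section_hg G V1)"
    and z2: "restr (section_hg G V2) z \<in> convex hull PP_points (section_hg G V2)"
  shows "z \<in> convex hull PP_points G"
proof -
  define G1 where "G1 = section_hg G V1"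
  define G2 where "G2 = section_hg G V2"
  define W where "W = V1 \<inter> V2"
  have "finite (nodes G)" using hg by (simp add: hypergraph_with_loops_def)
  then have finW: "finite W" by (rule finite_subset[rotated]) (auto simp: W_def nV)
  have fin1: "\<forall>e\<in>edges G1. finite e" and fin2: "\<forall>e\<in>edges G2. finite e"
    using fin by (auto simp: G1_def G2_def)
  have "PP_points G1 \<subseteq> convex hull (binpts G1 W)"
    by (rule binarize[OF finW _ _ fin1]) (use noplus in \<open>auto simp: G1_def W_def\<close>)
  then have "convex hull PP_points G1 \<subseteq> convex hull (binpts G1 W)"
    by (intro hull_minimal) auto
  then have "restr G1 z \<in> convex hull (binpts G1 W)" using z1 G1_def by auto
  then obtain F1 and u1 :: "('a coord \<Rightarrow> real) \<Rightarrow> real" where F1: "finite F1" "F1 \<subseteq> binpts G1 W"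
    "\<forall>x\<in>F1. 0 \<le> u1 x" "sum u1 F1 = 1" "(\<Sum>x\<in>F1. u1 x *\<^sub>R x) = restr G1 z"
    unfolding convex_hull_explicit mem_Collect_eq by (elim exE conjE) blast
  have "PP_points G2 \<subseteq> convex hull (binpts G2 W)"
    by (rule binarize[OF finW _ _ fin2]) (use noplus in \<open>auto simp: G2_def W_def\<close>)
  then have "convex hull PP_points G2 \<subseteq> convex hull (binpts G2 W)"
    by (intro hull_minimal) auto
  then have "restr G2 z \<in> convex hull (binpts G2 W)" using z2 G2_def by auto
  then obtain F2 and u2 :: "('a coord \<Rightarrow> real) \<Rightarrow> real" where F2: "finite F2" "F2 \<subseteq> binpts G2 W"
    "\<forall>x\<in>F2. 0 \<le> u2 x" "sum u2 F2 = 1" "(\<Sum>x\<in>F2. u2 x *\<^sub>R x) = restr G2 z"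
    unfolding convex_hull_explicit mem_Collect_eq by (elim exE conjE) blast
  define pat where "pat x = {i\<in>W. x (Nd i) = (1::real)}" for x :: "'a coord \<Rightarrow> real"
  define \<alpha> where "\<alpha> T = sum u1 {x\<in>F1. pat x = T}" for T
  define \<beta> where "\<beta> T = sum u2 {x\<in>F2. pat x = T}" for T
  have pat1: "pat ` F1 \<subseteq> Pow W" and pat2: "pat ` F2 \<subseteq> Pow W" by (auto simp: pat_def)
  have finP: "finite (Pow W)" using finW by simp
  have bin1: "\<forall>i\<in>W. x (Nd i) = 0 \<or> x (Nd i) = 1" if "x \<in> F1" for x
    using F1(2) that by (auto simp: binpts_def)
  have bin2: "\<forall>i\<in>W. x (Nd i) = 0 \<or> x (Nd i) = 1" if "x \<in> F2" for x
    using F2(2) that by (auto simp: binpts_def)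
  have PP1: "F1 \<subseteq> PP_points G1" and PP2: "F2 \<subseteq> PP_points G2"
    using F1(2) F2(2) by (auto simp: binpts_def)
  have m1: "(\<Sum>T\<in>Pow W. \<alpha> T * (if U \<subseteq> T then 1 else 0)) = mom z U" if U: "U \<subseteq> W" for U
  proof -
    have "(\<Sum>T\<in>Pow W. \<alpha> T * (if U \<subseteq> T then 1 else 0)) = (\<Sum>x\<in>F1. u1 x * (if U \<subseteq> pat x then 1 else 0))"
      unfolding \<alpha>_def by (rule group_lemma[OF F1(1) pat1 finP, symmetric])
    also have "\<dots> = (\<Sum>x\<in>F1. u1 x * (\<Prod>i\<in>U. x (Nd i)))"
    proof (intro sum.cong refl)
      fix x assume xF: "x \<in> F1"
      show "u1 x * (if U \<subseteq> pat x then 1 else 0) = u1 x * (\<Prod>i\<in>U. x (Nd i))"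
        using prodpat[OF bin1[OF xF] U finW] by (simp add: pat_def)
    qed
    also have "\<dots> = mom z U"
    proof (rule moment[OF F1(1) PP1 F1(3,4,5)])
      show "finite U" using finite_subset[OF U finW] .
      show "U \<subseteq> nodes G1" using U by (auto simp: G1_def W_def)
      show "U \<in> edges G1" if "2 \<le> card U" using compl[OF _ that] U by (auto simp: G1_def W_def)
    qed
    finally show ?thesis .
  qed
  have m2: "(\<Sum>T\<in>Pow W. \<beta> T * (if U \<subseteq> T then 1 else 0)) = mom z U" if U: "U \<subseteq> W" for U
  proof -
    have "(\<Sum>T\<in>Pow W. \<beta> T * (if U \<subseteq> T then 1 else 0)) = (\<Sum>x\<in>F2. u2 x * (if U \<subseteq> pat x then 1 else 0))"
      unfolding \<beta>_def by (rule group_lemma[OF F2(1) pat2 finP, symmetric])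
    also have "\<dots> = (\<Sum>x\<in>F2. u2 x * (\<Prod>i\<in>U. x (Nd i)))"
    proof (intro sum.cong refl)
      fix x assume xF: "x \<in> F2"
      show "u2 x * (if U \<subseteq> pat x then 1 else 0) = u2 x * (\<Prod>i\<in>U. x (Nd i))"
        using prodpat[OF bin2[OF xF] U finW] by (simp add: pat_def)
    qed
    also have "\<dots> = mom z U"
    proof (rule moment[OF F2(1) PP2 F2(3,4,5)])
      show "finite U" using finite_subset[OF U finW] .
      show "U \<subseteq> nodes G2" using U by (auto simp: G2_def W_def)
      show "U \<in> edges G2" if "2 \<le> card U" using compl[OF _ that] U by (auto simp: G2_def W_def)
    qed
    finally show ?thesis .
  qed
  have ab: "\<alpha> T = \<beta> T" if "T \<subseteq> W" for T
  proof -
    have "(\<lambda>T. \<alpha> T - \<beta> T) T = 0"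
    proof (rule moment_inj[OF finW _ that])
      fix U assume "U \<subseteq> W"
      then show "(\<Sum>T\<in>Pow W. (\<alpha> T - \<beta> T) * (if U \<subseteq> T then 1 else 0)) = 0"
        using m1 m2 by (simp add: left_diff_distrib sum_subtractf)
    qed
    then show ?thesis by simp
  qed
  have asum: "(\<Sum>T\<in>Pow W. \<alpha> T) = 1"
    using group_lemma[OF F1(1) pat1 finP, of u1 "\<lambda>_. 1"] F1(4) by (simp add: \<alpha>_def)
  have anonneg: "0 \<le> \<alpha> T" for T using F1(3) by (auto simp: \<alpha>_def intro: sum_nonneg)
  define X where "X T = (1 / \<alpha> T) *\<^sub>R (\<Sum>x\<in>{x\<in>F1. pat x = T}. u1 x *\<^sub>R x)" for T
  define Y where "Y T = (1 / \<beta> T) *\<^sub>R (\<Sum>x\<in>{x\<in>F2. pat x = T}. u2 x *\<^sub>R x)" for T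
  have z1eq: "restr G1 z = (\<Sum>T\<in>Pow W. \<alpha> T *\<^sub>R X T)"
  proof -
    have "restr G1 z = (\<Sum>T\<in>Pow W. \<Sum>x\<in>{x\<in>F1. pat x = T}. u1 x *\<^sub>R x)"
      using sum.group[OF F1(1) finP pat1, of "\<lambda>x. u1 x *\<^sub>R x"] F1(5) by simp
    also have "\<dots> = (\<Sum>T\<in>Pow W. \<alpha> T *\<^sub>R X T)"
      unfolding \<alpha>_def X_def
      by (intro sum.cong refl scaled_sum) (use F1 in auto)
    finally show ?thesis .
  qed
  have z2eq: "restr G2 z = (\<Sum>T\<in>Pow W. \<alpha> T *\<^sub>R Y T)"
  proof -
    have "restr G2 z = (\<Sum>T\<in>Pow W. \<Sum>x\<in>{x\<in>F2. pat x = T}. u2 x *\<^sub>R x)"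
      using sum.group[OF F2(1) finP pat2, of "\<lambda>x. u2 x *\<^sub>R x"] F2(5) by simp
    also have "\<dots> = (\<Sum>T\<in>Pow W. \<beta> T *\<^sub>R Y T)"
      unfolding \<beta>_def Y_def
      by (intro sum.cong refl scaled_sum) (use F2 in auto)
    also have "\<dots> = (\<Sum>T\<in>Pow W. \<alpha> T *\<^sub>R Y T)"
      using ab by (intro sum.cong refl) auto
    finally show ?thesis .
  qed
  define L where "L p = (\<lambda>c. if c \<in> coords G1 then fst p c else snd p c)"
    for p :: "('a coord \<Rightarrow> real) \<times> ('a coord \<Rightarrow> real)"
  have linL: "linear L"
    by (rule linearI) (auto simp: L_def fun_eq_iff)
  have cG: "coords G = coords G1 \<union> coords G2"
    unfolding G1_def G2_def by (rule coords_G[OF hg nV eV])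
  have zeq: "z = (\<Sum>T\<in>Pow W. \<alpha> T *\<^sub>R L (X T, Y T))"
  proof
    fix c
    show "z c = (\<Sum>T\<in>Pow W. \<alpha> T *\<^sub>R L (X T, Y T)) c"
    proof (cases "c \<in> coords G1")
      case True
      have "z c = restr G1 z c" using True by (simp add: restr_def)
      then show ?thesis using True unfolding z1eq by (simp add: sum_fun_apply L_def)
    next
      case False
      have "z c = restr G2 z c" using False z cG by (auto simp: restr_def space_def)
      then show ?thesis using False unfolding z2eq by (simp add: sum_fun_apply L_def)
    qed
  qed
  define S where "S = {T\<in>Pow W. \<alpha> T \<noteq> 0}"
  have finS: "finite S" using finP by (simp add: S_def)
  have zS: "z = (\<Sum>T\<in>S. \<alpha> T *\<^sub>R L (X T, Y T))"
    unfolding zeq by (rule sum.mono_neutral_right) (auto simp: S_def finW)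
  have "(\<Sum>T\<in>Pow W. \<alpha> T) = (\<Sum>T\<in>S. \<alpha> T)"
    by (rule sum.mono_neutral_right) (auto simp: S_def finW)
  then have aS: "(\<Sum>T\<in>S. \<alpha> T) = 1" using asum by simp
  have inS: "L (X T, Y T) \<in> convex hull PP_points G" if T: "T \<in> S" for T
  proof -
    let ?A = "{x\<in>F1. pat x = T}" and ?B = "{x\<in>F2. pat x = T}"
    have TW: "T \<subseteq> W" and a0: "\<alpha> T \<noteq> 0" using T by (auto simp: S_def)
    have b0: "\<beta> T \<noteq> 0" using ab[OF TW] a0 by simp
    have XA: "X T \<in> convex hull ?A"
      unfolding X_def \<alpha>_def by (rule normalized_in_hull) (use F1 a0 in \<open>auto simp: \<alpha>_def\<close>)
    have YB: "Y T \<in> convex hull ?B"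
      unfolding Y_def \<beta>_def by (rule normalized_in_hull) (use F2 b0 in \<open>auto simp: \<beta>_def\<close>)
    have "(X T, Y T) \<in> convex hull (?A \<times> ?B)"
      using XA YB by (simp add: convex_hull_Times)
    then have "L (X T, Y T) \<in> convex hull (L ` (?A \<times> ?B))"
      using convex_hull_linear_image[OF linL] by blast
    moreover have "L ` (?A \<times> ?B) \<subseteq> PP_points G"
    proof
      fix g assume "g \<in> L ` (?A \<times> ?B)"
      then obtain x y where xy: "x \<in> ?A" "y \<in> ?B" "g = L (x, y)" by auto
      have agree: "\<forall>i\<in>V1 \<inter> V2. x (Nd i) = y (Nd i)"
      proof
        fix i assume i: "i \<in> V1 \<inter> V2"
        have "x (Nd i) = 0 \<or> x (Nd i) = 1" "y (Nd i) = 0 \<or> y (Nd i) = 1"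
          using bin1 bin2 xy i by (auto simp: W_def)
        moreover have "(x (Nd i) = 1) = (y (Nd i) = 1)"
          using xy i by (auto simp: pat_def W_def)
        ultimately show "x (Nd i) = y (Nd i)" by auto
      qed
      have "L (x, y) \<in> PP_points G"
        unfolding L_def G1_def fst_conv snd_conv
        by (rule glue_in[OF hg nV eV _ _ agree]) (use xy PP1 PP2 in \<open>auto simp: G1_def G2_def\<close>)
      then show "g \<in> PP_points G" using xy by simp
    qed
    ultimately show ?thesis by (meson hull_mono subsetD)
  qed
  show ?thesis
    unfolding zS by (rule convex_sum[OF finS convex_convex_hull aS]) (use anonneg inS in auto)
qed


lemma linear_restr: "linear (restr H)"
  by (rule linearI) (auto simp: restr_def fun_eq_iff)

lemma convex_space: "convex (space G)"
  by (auto simp: convex_def space_def)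

theorem corollary1:
  fixes G G1 G2 :: "'a hgraph"
  assumes "hypergraph_with_loops G"
    and "is_section_hg G1 G" and "is_section_hg G2 G"
    and "hg_union G1 G2 = G"
    and "complete_hg (hg_inter G1 G2)"
    and "lplus (hg_inter G1 G2) = {}"
  shows "PP G = {z \<in> space G. restr G1 z \<in> PP G1 \<and> restr G2 z \<in> PP G2}"
proof -
  note hg = assms(1)
  obtain V1 where V1: "V1 \<subseteq> nodes G" "G1 = section_hg G V1"
    using assms(2) unfolding is_section_hg_def by blast
  obtain V2 where V2: "V2 \<subseteq> nodes G" "G2 = section_hg G V2"
    using assms(3) unfolding is_section_hg_def by blast
  have nV: "nodes G = V1 \<union> V2"
    using arg_cong[OF assms(4), of nodes] V1 V2 by (simp add: hg_union_def)
  have eV0: "edges G = {e\<in>edges G. e \<subseteq> V1} \<union> {e\<in>edges G. e \<subseteq> V2}"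
    using arg_cong[OF assms(4), of edges] V1 V2 by (simp add: hg_union_def)
  have eV: "\<forall>e\<in>edges G. e \<subseteq> V1 \<or> e \<subseteq> V2"
  proof
    fix e assume "e \<in> edges G"
    then have "e \<in> {e\<in>edges G. e \<subseteq> V1} \<union> {e\<in>edges G. e \<subseteq> V2}" using eV0 by simp
    then show "e \<subseteq> V1 \<or> e \<subseteq> V2" by blast
  qed
  have fin: "\<forall>e\<in>edges G. finite e"
  proof
    fix e assume "e \<in> edges G"
    then have "2 \<le> card e" using hg by (auto simp: hypergraph_with_loops_def)
    then show "finite e" by (metis card.infinite not_numeral_le_zero)
  qed
  have noplus: "lplus G \<inter> (V1 \<inter> V2) = {}"
    using assms(6) V1 V2 by (auto simp: hg_inter_def)
  have compl: "U \<in> edges G" if "U \<subseteq> V1 \<inter> V2" "2 \<le> card U" for U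
  proof -
    have "U \<in> edges (hg_inter G1 G2)"
      using assms(5) that V1 V2 by (simp add: complete_hg_def hg_inter_def)
    then show ?thesis using V1 V2 by (simp add: hg_inter_def)
  qed
  have PPc: "PP H = convex hull PP_points H" for H :: "'a hgraph"
    by (simp add: PP_def conv_eq)
  show ?thesis
  proof (intro set_eqI iffI)
    fix z assume z: "z \<in> PP G"
    have "PP_points G \<subseteq> space G" by (auto simp: PP_points_def)
    then have "convex hull PP_points G \<subseteq> space G"
      by (intro hull_minimal convex_space)
    then have zs: "z \<in> space G" using z PPc by auto
    have r: "restr (section_hg G V) z \<in> PP (section_hg G V)" if V: "V \<subseteq> nodes G" for V
    proof -
      have "restr (section_hg G V) z \<in> restr (section_hg G V) ` (convex hull PP_points G)"
        using z PPc by auto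
      also have "\<dots> = convex hull (restr (section_hg G V) ` PP_points G)"
        by (rule convex_hull_linear_image[OF linear_restr])
      also have "\<dots> \<subseteq> convex hull PP_points (section_hg G V)"
        by (rule hull_mono) (use restr_in V in blast)
      finally show ?thesis using PPc by simp
    qed
    show "z \<in> {z \<in> space G. restr G1 z \<in> PP G1 \<and> restr G2 z \<in> PP G2}"
      using zs r[OF V1(1)] r[OF V2(1)] V1(2) V2(2) by simp
  next
    fix z assume "z \<in> {z \<in> space G. restr G1 z \<in> PP G1 \<and> restr G2 z \<in> PP G2}"
    then have z: "z \<in> space G" "restr G1 z \<in> PP G1" "restr G2 z \<in> PP G2" by auto
    have "z \<in> convex hull PP_points G"
      by (rule glue_main[OF hg nV eV fin noplus compl z(1)])
        (use z(2,3) V1(2) V2(2) PPc in auto)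
    then show "z \<in> PP G" using PPc by simp
  qed
qed

end
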